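(* Let $\mu$ be a Borel probability measure on $\mathbb{C}$ with compact support, and let $E=\{z\in\widehat{\mathbb{C}}:T_{\{\infty\},\mu}(z)=1\}$. If $z\in E$ and $k\in\mathbb{N}$, then $f^{(k)}_\omega(z)\in E$ for $\mathbb{P}_\mu$-almost every $\omega\in\Omega_\mu$.
   Context: $f_c(z)=z^2+c$, extended to $\widehat{\mathbb{C}}$ by $f_c(\infty)=\infty$. $\mathbb{P}_\mu$ is the infinite product of $\mu$ on $\Omega_\mu=\prod_{n\ge1}\operatorname{supp}\mu$. For $\omega=(c_n)$, $f^{(n)}_\omega=f_{c_n}\circ\cdots\circ f_{c_1}$, and $T_{\{\infty\},\mu}(z)=\mathbb{P}_\mu(\{\omega: f^{(n)}_\omega(z)\to\infty \text{ as } n\to\infty\})$. *)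

theory Defs
  imports "HOL-Probability.Probability"
begin

text \<open>The Riemann sphere is modelled as \<open>complex option\<close>, with \<open>None\<close> the point at infinity.\<close>

definition measure_support :: "complex measure \<Rightarrow> complex set" where
  "measure_support M = {z. \<forall>e>0. emeasure M (ball z e) > 0}"

fun quad_map :: "complex \<Rightarrow> complex option \<Rightarrow> complex option" where
  "quad_map c None = None"
| "quad_map c (Some z) = Some (z\<^sup>2 + c)"

text \<open>\<open>f^{(n)}_\<omega> = f_{c_n} \<circ> \<dots> \<circ> f_{c_1}\<close>; the sequence \<open>\<omega>\<close> is indexed from 0,
  so \<open>\<omega> 0 = c_1\<close>.\<close>
fun iter_comp :: "(nat \<Rightarrow> complex) \<Rightarrow> nat \<Rightarrow> complex option \<Rightarrow> complex option" where
  "iter_comp \<omega> 0 z = z"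
| "iter_comp \<omega> (Suc n) z = quad_map (\<omega> n) (iter_comp \<omega> n z)"

definition tends_to_infty :: "(nat \<Rightarrow> complex option) \<Rightarrow> bool" where
  "tends_to_infty s \<longleftrightarrow>
     (\<forall>R::real. eventually (\<lambda>n. case s n of None \<Rightarrow> True | Some w \<Rightarrow> R < norm w) sequentially)"

definition P_mu :: "complex measure \<Rightarrow> (nat \<Rightarrow> complex) measure" where
  "P_mu M = PiM UNIV (\<lambda>_. restrict_space M (measure_support M))"

definition T_infty :: "complex measure \<Rightarrow> complex option \<Rightarrow> real" where
  "T_infty M z = measure (P_mu M)
     {\<omega> \<in> space (P_mu M). tends_to_infty (\<lambda>n. iter_comp \<omega> n z)}"

end

theory Submission
  imports Defs
begin

fun itc :: "(nat \<Rightarrow> complex) \<Rightarrow> nat \<Rightarrow> complex \<Rightarrow> complex" where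
  "itc \<omega> 0 z = z"
| "itc \<omega> (Suc n) z = (itc \<omega> n z)\<^sup>2 + \<omega> n"

definition ttc :: "(nat \<Rightarrow> complex) \<Rightarrow> bool" where
  "ttc f \<longleftrightarrow> (\<forall>R::nat. \<exists>N. \<forall>n\<ge>N. real R < norm (f n))"

lemma iter_Some: "iter_comp \<omega> n (Some z) = Some (itc \<omega> n z)"
  by (induction n) auto

lemma iter_None: "iter_comp \<omega> n None = None"
  by (induction n) auto

lemma tends_None: "tends_to_infty (\<lambda>n. None)"
  by (simp add: tends_to_infty_def)

lemma tends_Some: "tends_to_infty (\<lambda>n. Some (f n)) \<longleftrightarrow> ttc f"
proof
  assume "tends_to_infty (\<lambda>n. Some (f n))"
  then show "ttc f" unfolding tends_to_infty_def ttc_def eventually_sequentially by auto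
next
  assume h: "ttc f"
  show "tends_to_infty (\<lambda>n. Some (f n))"
    unfolding tends_to_infty_def eventually_sequentially
  proof
    fix R :: real
    obtain R' :: nat where "R \<le> real R'" using real_arch_simple by blast
    with h obtain N where "\<forall>n\<ge>N. real R' < norm (f n)" unfolding ttc_def by blast
    then show "\<exists>N. \<forall>n\<ge>N. case Some (f n) of None \<Rightarrow> True | Some w \<Rightarrow> R < cmod w"
      using \<open>R \<le> real R'\<close> by force
  qed
qed

lemma itc_case_nat: "itc (case_nat c \<eta>) (Suc n) z = itc \<eta> n (z\<^sup>2 + c)"
  by (induction n arbitrary: z) auto

lemma ttc_shift: "ttc (\<lambda>n. f (Suc n)) \<longleftrightarrow> ttc f"
  unfolding ttc_def
  by (metis Suc_le_D Suc_le_mono le_SucI)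

lemma iter_comp_case_nat: "iter_comp (case_nat c \<eta>) (Suc n) w = iter_comp \<eta> n (quad_map c w)"
  by (cases w) (simp_all only: iter_Some iter_None itc_case_nat quad_map.simps)

lemma ttc_meas[measurable]:
  assumes [measurable]: "\<And>n. f n \<in> borel_measurable M"
  shows "Measurable.pred M (\<lambda>x. ttc (\<lambda>n. f n x))"
  unfolding ttc_def by measurable

lemma support_full:
  fixes M :: "complex measure"
  assumes "prob_space M" "sets M = sets borel"
  shows "emeasure M (measure_support M) = 1 \<and> closed (measure_support M)"
proof -
  interpret prob_space M by fact
  let ?F = "{ball z e |z e. e > 0 \<and> emeasure M (ball z e) = 0}"
  have opn: "\<And>S. S \<in> ?F \<Longrightarrow> openin (top_of_set UNIV) S" by auto
  obtain F' where F': "F' \<subseteq> ?F" "countable F'" "\<Union>F' = \<Union>?F"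
    by (rule Lindelof_openin[OF opn])
  have un: "\<Union>?F = - measure_support M"
  proof (intro equalityI subsetI)
    fix x assume "x \<in> \<Union>?F"
    then obtain z e where ze: "e > 0" "emeasure M (ball z e) = 0" "x \<in> ball z e" by auto
    have "ball x (e - dist z x) \<subseteq> ball z e"
    proof
      fix y assume "y \<in> ball x (e - dist z x)"
      then show "y \<in> ball z e" using dist_triangle[of z y x] by (auto simp: mem_ball)
    qed
    then have "emeasure M (ball x (e - dist z x)) \<le> emeasure M (ball z e)"
      using assms(2) by (intro emeasure_mono) auto
    then have "emeasure M (ball x (e - dist z x)) = 0"
      using ze(2) by simp
    moreover have "e - dist z x > 0" using ze(3) by auto
    ultimately show "x \<in> - measure_support M"
      unfolding measure_support_def by (auto intro!: exI[of _ "e - dist z x"])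
  next
    fix x assume "x \<in> - measure_support M"
    then obtain e where "e > 0" "\<not> emeasure M (ball x e) > 0" unfolding measure_support_def by auto
    then have "ball x e \<in> ?F" by (auto simp: not_less)
    moreover have "x \<in> ball x e" using \<open>e > 0\<close> by simp
    ultimately show "x \<in> \<Union>?F" by (rule UnionI)
  qed
  have ae1: "AE x in M. \<forall>B\<in>F'. x \<notin> B"
  proof (subst AE_ball_countable[OF F'(2)], intro ballI)
    fix B assume "B \<in> F'"
    then have "B \<in> ?F" by (rule subsetD[OF F'(1)])
    then obtain z e where "B = ball z e" "emeasure M (ball z e) = 0" by blast
    then have "B \<in> null_sets M" using assms(2) by (simp add: null_sets_def)
    then show "AE x in M. x \<notin> B" by (rule AE_not_in)
  qed
  have cmp: "- measure_support M = \<Union>F'" using F'(3) un by simp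
  have ae: "AE x in M. x \<in> measure_support M"
    using ae1
  proof (rule eventually_mono)
    fix x assume "\<forall>B\<in>F'. x \<notin> B"
    then have "x \<notin> \<Union>F'" by simp
    then show "x \<in> measure_support M" using cmp by (metis ComplI)
  qed
  have "open (\<Union>?F)" by (intro open_Union) auto
  then have cl: "closed (measure_support M)" using un by (simp add: closed_def)
  have "measure_support M \<in> sets M" using cl assms(2) by simp
  then have "emeasure M (measure_support M) = 1" using ae by (rule emeasure_eq_1_AE)
  then show ?thesis using cl by (rule conjI)
qed

locale qsetup =
  fixes M :: "complex measure"
  assumes pM: "prob_space M" and sM: "sets M = sets borel"
begin

abbreviation "SM \<equiv> measure_support M"
abbreviation "NN \<equiv> restrict_space M SM"
abbreviation "PP \<equiv> P_mu M"

lemma SM_sets: "SM \<in> sets M"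
  using support_full[OF pM sM] sM by auto

lemma probN: "prob_space NN"
  using prob_space_restrict_space[OF SM_sets] support_full[OF pM sM] by blast

lemma PP_eq: "PP = (\<Pi>\<^sub>M i\<in>UNIV. NN)"
  by (simp add: P_mu_def)

lemma seqNN: "sequence_space NN"
  unfolding sequence_space_def product_prob_space_def product_sigma_finite_def
      product_prob_space_axioms_def
  using probN prob_space_imp_sigma_finite by blast

lemma probP: "prob_space PP"
  unfolding PP_eq by (rule prob_space_PiM) (rule probN)

interpretation PPp: prob_space PP by (rule probP)
interpretation NNp: prob_space NN by (rule probN)
interpretation pair_sigma_finite NN PP
  by (simp add: pair_sigma_finite_def NNp.sigma_finite_measure_axioms PPp.sigma_finite_measure_axioms)

lemma id_meas: "(\<lambda>x. x) \<in> borel_measurable NN"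
  by (rule measurable_restrict_space1) (rule measurable_ident_sets[OF sM])

lemma comp_meas[measurable]: "(\<lambda>\<omega>. \<omega> n) \<in> borel_measurable PP"
proof -
  have "(\<lambda>\<omega>. \<omega> n) \<in> measurable (\<Pi>\<^sub>M i\<in>UNIV. NN) NN" by (rule measurable_component_singleton) simp
  from measurable_compose[OF this id_meas] show ?thesis unfolding PP_eq by simp
qed

lemma itc_meas[measurable]: "(\<lambda>x. itc (snd x) n (fst x)) \<in> borel_measurable (borel \<Otimes>\<^sub>M PP)"
  by (induction n) auto

definition G :: "complex \<Rightarrow> (nat \<Rightarrow> complex) set" where
  "G u = {\<eta> \<in> space PP. ttc (\<lambda>n. itc \<eta> n u)}"

lemma itc_meas1[measurable]: "(\<lambda>\<eta>. itc \<eta> n u) \<in> borel_measurable PP"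
    using measurable_compose[OF measurable_Pair[OF measurable_const[of u] measurable_ident] itc_meas[of n]]
    by (simp add: space_pair_measure)

lemma G_sets[measurable]: "G u \<in> sets PP"
proof -
  have "(\<lambda>\<eta>. itc \<eta> n u) \<in> borel_measurable PP" for n by simp
  then have "Measurable.pred PP (\<lambda>\<eta>. ttc (\<lambda>n. itc \<eta> n u))" by measurable
  then show ?thesis unfolding G_def pred_def .
qed

lemma T_Some: "T_infty M (Some u) = measure PP (G u)"
  unfolding T_infty_def G_def by (simp add: iter_Some tends_Some)

lemma T_None: "T_infty M None = 1"
  unfolding T_infty_def by (simp add: iter_None tends_None PPp.prob_space)

lemma T_meas: "(\<lambda>u. T_infty M (Some u)) \<in> borel_measurable borel"
proof -
  let ?G = "{x \<in> space (borel \<Otimes>\<^sub>M PP). ttc (\<lambda>n. itc (snd x) n (fst x))}"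
  have "Measurable.pred (borel \<Otimes>\<^sub>M PP) (\<lambda>x. ttc (\<lambda>n. itc (snd x) n (fst x)))" by measurable
  then have "?G \<in> sets (borel \<Otimes>\<^sub>M PP)" unfolding pred_def .
  then have "(\<lambda>u. emeasure PP (Pair u -` ?G)) \<in> borel_measurable borel"
    by (rule PPp.measurable_emeasure_Pair)
  moreover have "Pair u -` ?G = G u" for u
    by (auto simp: G_def space_pair_measure)
  ultimately have "(\<lambda>u. emeasure PP (G u)) \<in> borel_measurable borel" by simp
  then have "(\<lambda>u. enn2real (emeasure PP (G u))) \<in> borel_measurable borel" by measurable
  then show ?thesis by (simp add: T_Some measure_def)
qed

lemma T_meas'[measurable (raw)]:
  "g \<in> borel_measurable X \<Longrightarrow> (\<lambda>x. T_infty M (Some (g x))) \<in> borel_measurable X"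
  using measurable_compose[OF _ T_meas] by blast

lemma addc_meas[measurable]: "(\<lambda>c. u + c) \<in> borel_measurable NN"
  using id_meas by measurable

lemma Fm: "(\<lambda>(s, \<omega>). case_nat s \<omega>) \<in> measurable (NN \<Otimes>\<^sub>M PP) PP"
  unfolding PP_eq by measurable

lemma distF: "distr (NN \<Otimes>\<^sub>M PP) PP (\<lambda>(s, \<omega>). case_nat s \<omega>) = PP"
  unfolding PP_eq by (rule sequence_space.PiM_iter[OF seqNN])

lemma one_step:
  assumes "T_infty M (Some z) = 1"
  shows "AE c in NN. T_infty M (Some (z\<^sup>2 + c)) = 1"
proof -
  let ?F = "\<lambda>(s::complex, \<omega>). case_nat s \<omega>"
  let ?g = "\<lambda>c. ennreal (T_infty M (Some (z\<^sup>2 + c)))"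
  have "emeasure PP (G z) = (\<integral>\<^sup>+\<omega>. indicator (G z) \<omega> \<partial>PP)" by simp
  also have "\<dots> = (\<integral>\<^sup>+\<omega>. indicator (G z) \<omega> \<partial>(distr (NN \<Otimes>\<^sub>M PP) PP ?F))"
    by (simp add: distF)
  also have "\<dots> = (\<integral>\<^sup>+x. indicator (G z) (?F x) \<partial>(NN \<Otimes>\<^sub>M PP))"
    by (rule nn_integral_distr[OF Fm]) (simp add: distF)
  also have "\<dots> = (\<integral>\<^sup>+c. \<integral>\<^sup>+\<eta>. indicator (G z) (?F (c, \<eta>)) \<partial>PP \<partial>NN)"
  proof (rule PPp.nn_integral_fst[symmetric])
    show "(\<lambda>x. indicator (G z) (?F x)) \<in> borel_measurable (NN \<Otimes>\<^sub>M PP)"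
      using measurable_compose[OF Fm borel_measurable_indicator[OF G_sets[of z]]] by simp
  qed
  also have "\<dots> = (\<integral>\<^sup>+c. ?g c \<partial>NN)"
  proof (rule nn_integral_cong)
    fix c assume c: "c \<in> space NN"
    have "(\<integral>\<^sup>+\<eta>. indicator (G z) (?F (c, \<eta>)) \<partial>PP) = (\<integral>\<^sup>+\<eta>. indicator (G (z\<^sup>2 + c)) \<eta> \<partial>PP)"
    proof (rule nn_integral_cong)
      fix \<eta> assume \<eta>: "\<eta> \<in> space PP"
      have sp: "case_nat c \<eta> \<in> space PP" using c \<eta> unfolding PP_eq
        by (auto simp: space_PiM PiE_iff split: nat.split)
      have "ttc (\<lambda>n. itc (case_nat c \<eta>) n z) \<longleftrightarrow> ttc (\<lambda>n. itc (case_nat c \<eta>) (Suc n) z)"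
        using ttc_shift[of "\<lambda>n. itc (case_nat c \<eta>) n z"] by simp
      also have "\<dots> \<longleftrightarrow> ttc (\<lambda>n. itc \<eta> n (z\<^sup>2 + c))"
        by (simp only: itc_case_nat)
      finally have "case_nat c \<eta> \<in> G z \<longleftrightarrow> \<eta> \<in> G (z\<^sup>2 + c)"
        using sp \<eta> by (simp add: G_def)
      then show "indicator (G z) (?F (c, \<eta>)) = indicator (G (z\<^sup>2 + c)) \<eta>"
        by (simp add: indicator_def)
    qed
    also have "\<dots> = emeasure PP (G (z\<^sup>2 + c))" by simp
    also have "\<dots> = ?g c" by (simp add: T_Some PPp.emeasure_eq_measure)
    finally show "(\<integral>\<^sup>+\<eta>. indicator (G z) (?F (c, \<eta>)) \<partial>PP) = ?g c" .
  qed
  finally have eq: "emeasure PP (G z) = (\<integral>\<^sup>+c. ?g c \<partial>NN)" .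
  have "emeasure PP (G z) = 1" using assms by (simp add: T_Some PPp.emeasure_eq_measure)
  then have int1: "(\<integral>\<^sup>+c. ?g c \<partial>NN) = 1" using eq by simp
  have gm: "?g \<in> borel_measurable NN" by measurable
  have le': "T_infty M (Some (z\<^sup>2 + c)) \<le> 1" for c by (simp add: T_Some PPp.prob_le_1)
  have le: "?g c \<le> 1" for c using le'[of c] by simp
  have "(\<integral>\<^sup>+c. (1 - ?g c) \<partial>NN) = (\<integral>\<^sup>+c. 1 \<partial>NN) - (\<integral>\<^sup>+c. ?g c \<partial>NN)"
    by (rule nn_integral_diff) (auto simp: gm int1 le le')
  then have "(\<integral>\<^sup>+c. (1 - ?g c) \<partial>NN) = 0" using int1 NNp.emeasure_space_1 by simp
  then have "AE c in NN. 1 - ?g c = 0"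
    by (subst nn_integral_0_iff_AE[symmetric]) (use gm in measurable)
  then show ?thesis
  proof (rule eventually_mono)
    fix c assume "1 - ?g c = 0"
    then have "1 \<le> ?g c" by (rule ennreal_minus_eq_0)
    then have "1 \<le> T_infty M (Some (z\<^sup>2 + c))"
      by (simp only: ennreal_ge_1)
    moreover have "T_infty M (Some (z\<^sup>2 + c)) \<le> 1" by (simp add: T_Some PPp.prob_le_1)
    ultimately show "T_infty M (Some (z\<^sup>2 + c)) = 1" by simp
  qed
qed

lemma Qpred[measurable]: "Measurable.pred PP (\<lambda>\<omega>. T_infty M (iter_comp \<omega> k w) = 1)"
proof (cases w)
  case None
  then show ?thesis by (simp add: iter_None T_None)
next
  case (Some z)
  then show ?thesis by (simp add: iter_Some)
qed

lemma main_lemma: "T_infty M w = 1 \<Longrightarrow> AE \<omega> in PP. T_infty M (iter_comp \<omega> k w) = 1"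
proof (induction k arbitrary: w)
  case 0
  then show ?case by simp
next
  case (Suc k)
  let ?F = "\<lambda>(s::complex, \<omega>). case_nat s \<omega>"
  let ?Q = "\<lambda>\<omega>. T_infty M (iter_comp \<omega> (Suc k) w) = 1"
  have Qs: "{\<omega> \<in> space PP. ?Q \<omega>} \<in> sets PP" using Qpred[of "Suc k" w] unfolding pred_def .
  have Qs2: "{x \<in> space (NN \<Otimes>\<^sub>M PP). ?Q (?F x)} \<in> sets (NN \<Otimes>\<^sub>M PP)"
    using measurable_compose[OF Fm Qpred[of "Suc k" w]] unfolding pred_def by simp
  have ae: "AE c in NN. AE \<eta> in PP. ?Q (?F (c, \<eta>))"
  proof (cases w)
    case None
    then show ?thesis by (simp add: iter_None T_None)
  next
    case (Some z)
    have "AE c in NN. T_infty M (Some (z\<^sup>2 + c)) = 1"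
      using one_step Suc.prems Some by simp
    then show ?thesis
    proof (rule eventually_mono)
      fix c assume "T_infty M (Some (z\<^sup>2 + c)) = 1"
      then have "AE \<eta> in PP. T_infty M (iter_comp \<eta> k (Some (z\<^sup>2 + c))) = 1" by (rule Suc.IH)
      then show "AE \<eta> in PP. ?Q (?F (c, \<eta>))"
        by (simp only: Some prod.case iter_comp_case_nat quad_map.simps)
    qed
  qed
  have "AE x in NN \<Otimes>\<^sub>M PP. ?Q (?F x)" by (rule AE_pair_measure[OF Qs2 ae])
  then have "AE \<omega> in distr (NN \<Otimes>\<^sub>M PP) PP ?F. ?Q \<omega>"
    by (subst AE_distr_iff[OF Fm Qs])
  then show ?case by (simp only: distF)
qed

end

theorem lemma3p6:
  fixes M :: "complex measure" and z :: "complex option" and k :: nat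
  assumes "prob_space M"
    and "sets M = sets borel"
    and "compact (measure_support M)"
    and "z \<in> {w. T_infty M w = 1}"
  shows "AE \<omega> in P_mu M. iter_comp \<omega> k z \<in> {w. T_infty M w = 1}"
proof -
  interpret qsetup M using assms(1,2) by (rule qsetup.intro)
  show ?thesis using main_lemma[of z k] assms(4) by simp
qed

end
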